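(* Let $m\ge1$, $n\ge1$, $N>2n$, let $\Sigma_0,\dots,\Sigma_n\in\mathbb R^{m\times m}$ and let $\mathbf T_n$ be the block-Toeplitz matrix whose $(i,j)$ block ($i,j=0,\dots,n$) is $\Sigma_{i-j}$ if $i\ge j$ and $\Sigma_{j-i}^\top$ if $i<j$. Assume there exists a symmetric positive definite $mN\times mN$ matrix $\bar{\boldsymbol\Sigma}_N$ with $E_n^\top\bar{\boldsymbol\Sigma}_NE_n=\mathbf T_n$ and $\mathbf U_N^\top\bar{\boldsymbol\Sigma}_N\mathbf U_N=\bar{\boldsymbol\Sigma}_N$. Then for every $(\Lambda,\Theta)\in\mathcal L_+$, $$J(\Lambda,\Theta)\ge mN+\log\det\bar{\boldsymbol\Sigma}_N,$$ where $J(\Lambda,\Theta)=\operatorname{Tr}(\Lambda\mathbf T_n)-\log\det(E_n\Lambda E_n^\top+\mathbf U_N\Theta\mathbf U_N^\top-\Theta)$.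
   Context: $\mathfrak S_k$ denotes the space of real symmetric $mk\times mk$ matrices. $E_n$ is the $mN\times m(n+1)$ matrix with $N\times(n+1)$ blocks of size $m\times m$ whose $(i,i)$ blocks ($i=1,\dots,n+1$) are $I_m$ and other blocks $0$. $\mathbf U_N$ is the $mN\times mN$ block shift matrix whose $(i,i+1)$ blocks ($i=1,\dots,N-1$) and $(N,1)$ block are $I_m$, others $0$. The linear map $A:\mathfrak S_{n+1}\times\mathfrak S_N\to\mathfrak S_N$ is $A(\Lambda,\Theta)=E_n\Lambda E_n^\top+\mathbf U_N\Theta\mathbf U_N^\top-\Theta$, and $\mathcal L_+=\{(\Lambda,\Theta)\in(\ker A)^\perp:A(\Lambda,\Theta)>0\}$, orthogonality being with respect to $\langle(\Lambda_1,\Theta_1),(\Lambda_2,\Theta_2)\rangle=\operatorname{Tr}(\Lambda_1\Lambda_2)+\operatorname{Tr}(\Theta_1\Theta_2)$. *)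

theory Defs
  imports "Jordan_Normal_Form.Matrix" "Jordan_Normal_Form.Determinant"
begin

text \<open>Block indices are
0-based: the block (i,j) of a matrix with m x m blocks consists of entries (r,c) with
r div m = i, c div m = j, and inside-block position (r mod m, c mod m).\<close>

definition mtrace :: "real mat \<Rightarrow> real" where
  "mtrace A = (\<Sum>i<dim_row A. A $$ (i, i))"

definition pos_def_mat :: "nat \<Rightarrow> real mat \<Rightarrow> bool" where
  "pos_def_mat k A \<longleftrightarrow> A \<in> carrier_mat k k \<and> transpose_mat A = A \<and>
     (\<forall>v \<in> carrier_vec k. v \<noteq> 0\<^sub>v k \<longrightarrow> v \<bullet> (A *\<^sub>v v) > 0)"

definition symS :: "nat \<Rightarrow> nat \<Rightarrow> real mat set" where
  "symS m k = {A. A \<in> carrier_mat (m*k) (m*k) \<and> transpose_mat A = A}"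

definition toeplitzT :: "nat \<Rightarrow> nat \<Rightarrow> (nat \<Rightarrow> real mat) \<Rightarrow> real mat" where
  "toeplitzT m n Sig = mat (m*(n+1)) (m*(n+1)) (\<lambda>(r,c).
     (let i = r div m; j = c div m; a = r mod m; b = c mod m in
      if j \<le> i then Sig (i - j) $$ (a, b)
      else transpose_mat (Sig (j - i)) $$ (a, b)))"

definition Emat :: "nat \<Rightarrow> nat \<Rightarrow> nat \<Rightarrow> real mat" where
  "Emat m N n = mat (m*N) (m*(n+1)) (\<lambda>(r,c).
     if r div m = c div m \<and> r mod m = c mod m then 1 else 0)"

text \<open>U_N: mN x mN block shift; blocks (i,i+1) (1-based i = 1..N-1) and (N,1) are I_m,
  i.e. with 0-based block indices, block (i, (i+1) mod N) is I_m.\<close>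
definition Umat :: "nat \<Rightarrow> nat \<Rightarrow> real mat" where
  "Umat m N = mat (m*N) (m*N) (\<lambda>(r,c).
     if c div m = (r div m + 1) mod N \<and> r mod m = c mod m then 1 else 0)"

definition Aop :: "nat \<Rightarrow> nat \<Rightarrow> nat \<Rightarrow> real mat \<Rightarrow> real mat \<Rightarrow> real mat" where
  "Aop m N n \<Lambda> \<Theta> =
     Emat m N n * \<Lambda> * transpose_mat (Emat m N n)
     + Umat m N * \<Theta> * transpose_mat (Umat m N) - \<Theta>"

definition kerA_perp :: "nat \<Rightarrow> nat \<Rightarrow> nat \<Rightarrow> (real mat \<times> real mat) set" where
  "kerA_perp m N n = {(\<Lambda>, \<Theta>). \<Lambda> \<in> symS m (n+1) \<and> \<Theta> \<in> symS m N \<and>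
     (\<forall>\<Lambda>' \<in> symS m (n+1). \<forall>\<Theta>' \<in> symS m N.
        Aop m N n \<Lambda>' \<Theta>' = 0\<^sub>m (m*N) (m*N) \<longrightarrow>
        mtrace (\<Lambda> * \<Lambda>') + mtrace (\<Theta> * \<Theta>') = 0)}"

definition Lplus :: "nat \<Rightarrow> nat \<Rightarrow> nat \<Rightarrow> (real mat \<times> real mat) set" where
  "Lplus m N n = {(\<Lambda>, \<Theta>). (\<Lambda>, \<Theta>) \<in> kerA_perp m N n \<and>
     pos_def_mat (m*N) (Aop m N n \<Lambda> \<Theta>)}"

definition Jfun :: "nat \<Rightarrow> nat \<Rightarrow> nat \<Rightarrow> (nat \<Rightarrow> real mat) \<Rightarrow> real mat \<Rightarrow> real mat \<Rightarrow> real" where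
  "Jfun m N n Sig \<Lambda> \<Theta> =
     mtrace (\<Lambda> * toeplitzT m n Sig) - ln (det (Aop m N n \<Lambda> \<Theta>))"

end

theory Submission
  imports Defs "Jordan_Normal_Form.Schur_Decomposition"
begin


lemma tr_comm:
  fixes X Y :: "'a::comm_ring_1 mat"
  assumes X: "X \<in> carrier_mat n k" and Y: "Y \<in> carrier_mat k n"
  shows "(\<Sum>i<n. (X*Y)$$(i,i)) = (\<Sum>j<k. (Y*X)$$(j,j))"
proof -
  have "(\<Sum>i<n. (X*Y)$$(i,i)) = (\<Sum>i<n. \<Sum>j<k. X$$(i,j) * Y$$(j,i))"
    using X Y by (intro sum.cong refl) (auto simp: scalar_prod_def lessThan_atLeast0)
  also have "\<dots> = (\<Sum>j<k. \<Sum>i<n. Y$$(j,i) * X$$(i,j))"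
    by (subst sum.swap) (simp add: mult.commute)
  also have "\<dots> = (\<Sum>j<k. (Y*X)$$(j,j))"
    using X Y by (intro sum.cong refl) (auto simp: scalar_prod_def lessThan_atLeast0)
  finally show ?thesis .
qed

definition cq :: "complex mat \<Rightarrow> complex vec \<Rightarrow> complex" where
  "cq X v = (\<Sum>i<dim_vec v. cnj (v$i) * (X *\<^sub>v v)$i)"

lemma cq_expand:
  assumes X: "X \<in> carrier_mat n n" and v: "v \<in> carrier_vec n"
  shows "cq (map_mat complex_of_real X) v = (\<Sum>i<n. \<Sum>k<n. cnj (v$i) * of_real (X$$(i,k)) * v$k)"
  using X v unfolding cq_def
  by (auto intro!: sum.cong simp: scalar_prod_def lessThan_atLeast0 sum_distrib_left mult.assoc)

lemma real_quad:
  fixes X :: "real mat"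
  assumes X: "X \<in> carrier_mat n n" and a: "a \<in> carrier_vec n"
  shows "a \<bullet> (X *\<^sub>v a) = (\<Sum>i<n. \<Sum>k<n. X$$(i,k) * a$i * a$k)"
  using X a
  by (auto intro!: sum.cong simp: scalar_prod_def lessThan_atLeast0 sum_distrib_left mult_ac)

lemma pd_nonneg:
  assumes "pos_def_mat n X" "a \<in> carrier_vec n"
  shows "a \<bullet> (X *\<^sub>v a) \<ge> 0"
proof (cases "a = 0\<^sub>v n")
  case True
  then show ?thesis using assms unfolding pos_def_mat_def by (auto simp: scalar_prod_def)
next
  case False
  then show ?thesis using assms unfolding pos_def_mat_def by (auto intro: less_imp_le)
qed

lemma cq_pos:
  assumes pd: "pos_def_mat n X" and v: "v \<in> carrier_vec n" and v0: "v \<noteq> 0\<^sub>v n"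
  shows "\<exists>r>0. cq (map_mat complex_of_real X) v = of_real r"
proof -
  have X: "X \<in> carrier_mat n n" and sym: "transpose_mat X = X" using pd unfolding pos_def_mat_def by auto
  have symm: "X$$(i,k) = X$$(k,i)" if "i < n" "k < n" for i k
    using sym that X by (metis carrier_matD index_transpose_mat(1))
  define a where "a = vec n (\<lambda>i. Re (v$i))"
  define b where "b = vec n (\<lambda>i. Im (v$i))"
  have a: "a \<in> carrier_vec n" and b: "b \<in> carrier_vec n" unfolding a_def b_def by auto
  let ?q = "cq (map_mat complex_of_real X) v"
  have "Re ?q = (\<Sum>i<n. \<Sum>k<n. X$$(i,k) * a$i * a$k) + (\<Sum>i<n. \<Sum>k<n. X$$(i,k) * b$i * b$k)"
    unfolding cq_expand[OF X v] Re_sum sum.distrib[symmetric]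
    by (intro sum.cong refl) (simp add: a_def b_def algebra_simps)
  also have "\<dots> = a \<bullet> (X *\<^sub>v a) + b \<bullet> (X *\<^sub>v b)"
    using real_quad[OF X a] real_quad[OF X b] by simp
  finally have re: "Re ?q = a \<bullet> (X *\<^sub>v a) + b \<bullet> (X *\<^sub>v b)" .
  have "Im ?q = (\<Sum>i<n. \<Sum>k<n. X$$(i,k) * a$i * b$k) - (\<Sum>i<n. \<Sum>k<n. X$$(i,k) * b$i * a$k)"
    unfolding cq_expand[OF X v] Im_sum sum_subtractf[symmetric]
    by (intro sum.cong refl) (simp add: a_def b_def algebra_simps)
  also have "(\<Sum>i<n. \<Sum>k<n. X$$(i,k) * b$i * a$k) = (\<Sum>k<n. \<Sum>i<n. X$$(i,k) * b$i * a$k)"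
    by (rule sum.swap)
  also have "\<dots> = (\<Sum>i<n. \<Sum>k<n. X$$(i,k) * a$i * b$k)"
    by (intro sum.cong refl) (simp add: symm mult.commute mult.left_commute)
  finally have im: "Im ?q = 0" by simp
  have "a \<noteq> 0\<^sub>v n \<or> b \<noteq> 0\<^sub>v n"
  proof (rule ccontr)
    assume "\<not> ?thesis"
    hence "v = 0\<^sub>v n" using v unfolding a_def b_def
      by (auto simp: vec_eq_iff complex_eq_iff)
    with v0 show False by simp
  qed
  hence "a \<bullet> (X *\<^sub>v a) + b \<bullet> (X *\<^sub>v b) > 0"
    using pd_nonneg[OF pd a] pd_nonneg[OF pd b] pd a b unfolding pos_def_mat_def
    by (smt (verit))
  with re im show ?thesis by (intro exI[of _ "Re ?q"]) (auto simp: complex_eq_iff)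
qed

lemma eig_pos:
  assumes pA: "pos_def_mat n A" and pS: "pos_def_mat n S"
    and v: "v \<in> carrier_vec n" and v0: "v \<noteq> 0\<^sub>v n"
    and ev: "map_mat complex_of_real (A * S) *\<^sub>v v = e \<cdot>\<^sub>v v"
  shows "\<exists>r>0. e = of_real r"
proof -
  have A: "A \<in> carrier_mat n n" and S: "S \<in> carrier_mat n n" using pA pS unfolding pos_def_mat_def by auto
  define Ac where "Ac = map_mat complex_of_real A"
  define Sc where "Sc = map_mat complex_of_real S"
  have Ac: "Ac \<in> carrier_mat n n" and Sc: "Sc \<in> carrier_mat n n" using A S unfolding Ac_def Sc_def by auto
  have prod: "map_mat complex_of_real (A * S) = Ac * Sc"
    unfolding Ac_def Sc_def using A S by (simp add: of_real_hom.mat_hom_mult)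
  define w where "w = Sc *\<^sub>v v"
  have w: "w \<in> carrier_vec n" using Sc v unfolding w_def by auto
  obtain rS where rS: "rS > 0" "cq Sc v = of_real rS" using cq_pos[OF pS v v0] unfolding Sc_def by auto
  have w0: "w \<noteq> 0\<^sub>v n"
  proof
    assume "w = 0\<^sub>v n"
    hence "cq Sc v = 0" unfolding cq_def w_def[symmetric] using v by simp
    with rS show False by simp
  qed
  obtain rA where rA: "rA > 0" "cq Ac w = of_real rA" using cq_pos[OF pA w w0] unfolding Ac_def by auto
  have "Ac *\<^sub>v w = e \<cdot>\<^sub>v v" unfolding w_def using ev prod Ac Sc v by (simp add: assoc_mult_mat_vec)
  hence "cq Ac w = (\<Sum>i<n. cnj (w$i) * (e * v$i))" unfolding cq_def using w v by simp
  also have "\<dots> = e * cnj (\<Sum>i<n. cnj (v$i) * w$i)"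
    by (simp add: sum_distrib_left mult_ac)
  also have "(\<Sum>i<n. cnj (v$i) * w$i) = cq Sc v" unfolding cq_def w_def using v by simp
  finally have "of_real rA = e * of_real rS" using rA rS by simp
  hence "e = of_real (rA / rS)" using rS by (simp add: field_simps)
  thus ?thesis using rA rS by (intro exI[of _ "rA/rS"]) auto
qed

lemma list_ineq:
  fixes rs :: "real list"
  assumes "\<forall>r\<in>set rs. r > 0"
  shows "prod_list rs > 0 \<and> real (length rs) + ln (prod_list rs) \<le> sum_list rs"
  using assms
proof (induct rs)
  case Nil
  then show ?case by simp
next
  case (Cons r rs)
  hence r: "r > 0" and IH: "prod_list rs > 0" "real (length rs) + ln (prod_list rs) \<le> sum_list rs" by auto
  have "ln (r * prod_list rs) = ln r + ln (prod_list rs)" by (rule ln_mult_pos[OF r IH(1)])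
  moreover have "ln r \<le> r - 1" using ln_le_minus_one[OF r] .
  ultimately show ?case using r IH by simp
qed

lemma sum_list_upt: "sum_list (map f [0..<n]) = (\<Sum>i<n. f i)"
  by (induct n) auto

lemma main_ineq:
  assumes pA: "pos_def_mat n A" and pS: "pos_def_mat n S"
  shows "det (A*S) > 0 \<and> real n + ln (det (A*S)) \<le> mtrace (A*S)"
proof -
  have A: "A \<in> carrier_mat n n" and S: "S \<in> carrier_mat n n" using pA pS unfolding pos_def_mat_def by auto
  define M where "M = A * S"
  have M: "M \<in> carrier_mat n n" unfolding M_def using A S by auto
  define Mc where "Mc = map_mat complex_of_real M"
  have Mc: "Mc \<in> carrier_mat n n" unfolding Mc_def using M by auto
  obtain es where cp: "char_poly Mc = (\<Prod>a\<leftarrow>es. [:- a, 1:])" and len: "length es = n"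
    using char_poly_factorized[OF Mc] by auto
  obtain B P Q where sd: "schur_decomposition Mc es = (B,P,Q)" by (metis prod_cases3)
  from schur_decomposition[OF Mc cp sd]
  have sim: "similar_mat_wit Mc B P Q" and ut: "upper_triangular B" and dg: "diag_mat B = es" by auto
  from sim Mc have B: "B \<in> carrier_mat n n" and P: "P \<in> carrier_mat n n" and Q: "Q \<in> carrier_mat n n"
    and PQ: "P * Q = 1\<^sub>m n" and QP: "Q * P = 1\<^sub>m n" and McPBQ: "Mc = P * B * Q"
    unfolding similar_mat_wit_def Let_def by auto
  have "det Mc = det P * det B * det Q" unfolding McPBQ using P B Q
    by (simp add: det_mult[of _ n])
  also have "\<dots> = det B * det (P * Q)" using P Q by (simp add: det_mult[of _ n])
  also have "\<dots> = prod_list es" unfolding PQ det_upper_triangular[OF ut B] dg by simp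
  finally have detMc: "det Mc = prod_list es" .
  have "(\<Sum>i<n. Mc $$ (i,i)) = (\<Sum>i<n. (P * (B * Q)) $$ (i,i))" unfolding McPBQ
    using P B Q by (simp add: assoc_mult_mat[of _ n n _ n _ n])
  also have "\<dots> = (\<Sum>i<n. ((B * Q) * P) $$ (i,i))" using tr_comm[OF P, of "B*Q"] B Q by auto
  also have "(B * Q) * P = B" using B Q P QP by (simp add: assoc_mult_mat[of _ n n _ n _ n])
  finally have trMc0: "(\<Sum>i<n. Mc $$ (i,i)) = (\<Sum>i<n. B $$ (i,i))" .
  have "sum_list es = (\<Sum>i<n. B $$ (i,i))" unfolding dg[symmetric] diag_mat_def
    using B by (simp add: sum_list_upt)
  with trMc0 have trMc: "(\<Sum>i<n. Mc $$ (i,i)) = sum_list es" by simp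
  have eig: "\<exists>r>0. e = of_real r" if e: "e \<in> set es" for e
  proof -
    obtain xs ys where "es = xs @ e # ys" using split_list[OF e] by auto
    hence "poly (char_poly Mc) e = 0" unfolding cp by simp
    hence "eigenvalue Mc e" using eigenvalue_root_char_poly[OF Mc] by simp
    then obtain v where "eigenvector Mc v e" unfolding eigenvalue_def by auto
    hence v: "v \<in> carrier_vec n" "v \<noteq> 0\<^sub>v n" "Mc *\<^sub>v v = e \<cdot>\<^sub>v v"
      unfolding eigenvector_def using Mc by auto
    show ?thesis using eig_pos[OF pA pS v(1,2)] v(3) unfolding Mc_def M_def by simp
  qed
  define rs where "rs = map Re es"
  have es: "es = map complex_of_real rs"
  proof -
    have "map (\<lambda>x. complex_of_real (Re x)) es = es"
      by (rule map_idI) (use eig in force)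
    thus ?thesis by (simp add: rs_def o_def)
  qed
  have rpos: "\<forall>r\<in>set rs. r > 0" unfolding rs_def using eig by force
  have ofp: "complex_of_real (prod_list xs) = prod_list (map complex_of_real xs)" for xs
    by (induct xs) auto
  have ofs: "complex_of_real (sum_list xs) = sum_list (map complex_of_real xs)" for xs
    by (induct xs) auto
  have "complex_of_real (det M) = det Mc" unfolding Mc_def by simp
  hence dM: "det M = prod_list rs" using detMc es ofp by (metis of_real_eq_iff)
  have "complex_of_real (mtrace M) = (\<Sum>i<n. Mc $$ (i,i))"
    unfolding mtrace_def Mc_def using M by auto
  hence tM: "mtrace M = sum_list rs" using trMc es ofs by (metis of_real_eq_iff)
  have "length rs = n" unfolding rs_def using len by simp
  with list_ineq[OF rpos] dM tM show ?thesis unfolding M_def by simp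
qed

lemma id_pd: "pos_def_mat n (1\<^sub>m n)"
  unfolding pos_def_mat_def
proof (intro conjI ballI impI)
  fix v :: "real vec" assume v: "v \<in> carrier_vec n" and v0: "v \<noteq> 0\<^sub>v n"
  then obtain i where i: "i < n" "v$i \<noteq> 0" by (auto simp: vec_eq_iff)
  have "v \<bullet> (1\<^sub>m n *\<^sub>v v) = (\<Sum>j\<in>{0..<n}. v$j * v$j)" using v by (simp add: scalar_prod_def)
  also have "\<dots> \<ge> v$i * v$i" by (rule member_le_sum) (use i in auto)
  finally show "v \<bullet> (1\<^sub>m n *\<^sub>v v) > 0" using i
    by (smt (verit, best) not_real_square_gt_zero)
qed auto

lemma mtrace_carrier: "X \<in> carrier_mat p p \<Longrightarrow> mtrace X = (\<Sum>i<p. X$$(i,i))"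
  unfolding mtrace_def by auto

theorem lemma3:
  fixes m n N :: nat and Sig :: "nat \<Rightarrow> real mat" and SigmaBar :: "real mat"
    and \<Lambda> \<Theta> :: "real mat"
  assumes "m \<ge> 1" and "n \<ge> 1" and "N > 2 * n"
    and "\<forall>k \<le> n. Sig k \<in> carrier_mat m m"
    and "pos_def_mat (m*N) SigmaBar"
    and "transpose_mat (Emat m N n) * SigmaBar * Emat m N n = toeplitzT m n Sig"
    and "transpose_mat (Umat m N) * SigmaBar * Umat m N = SigmaBar"
    and "(\<Lambda>, \<Theta>) \<in> Lplus m N n"
  shows "Jfun m N n Sig \<Lambda> \<Theta> \<ge> real (m*N) + ln (det SigmaBar)"
proof -
  define K where "K = m*N"
  define k where "k = m*(n+1)"
  define E where "E = Emat m N n"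
  define U where "U = Umat m N"
  define S where "S = SigmaBar"
  define A where "A = Aop m N n \<Lambda> \<Theta>"
  have pS: "pos_def_mat K S" using assms(5) unfolding K_def S_def .
  have pA: "pos_def_mat K A" using assms(8) unfolding Lplus_def A_def K_def by auto
  have L: "\<Lambda> \<in> carrier_mat k k" and T: "\<Theta> \<in> carrier_mat K K"
    using assms(8) unfolding Lplus_def kerA_perp_def symS_def k_def K_def by auto
  have E: "E \<in> carrier_mat K k" unfolding E_def Emat_def K_def k_def by auto
  have U: "U \<in> carrier_mat K K" unfolding U_def Umat_def K_def by auto
  have S: "S \<in> carrier_mat K K" using pS unfolding pos_def_mat_def by auto
  have Et: "transpose_mat E \<in> carrier_mat k K" using E by auto
  have Ut: "transpose_mat U \<in> carrier_mat K K" using U by auto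
  have USU: "transpose_mat U * (S * U) = S"
    using assms(7) U S unfolding U_def[symmetric] S_def[symmetric]
    by (simp add: assoc_mult_mat[of _ K K _ K _ K])
  have Tn: "toeplitzT m n Sig = transpose_mat E * (S * E)"
    using assms(6) E S unfolding E_def[symmetric] S_def[symmetric]
    by (simp add: assoc_mult_mat[of _ k K _ K _ k])
  have Adef: "A = E * \<Lambda> * transpose_mat E + U * \<Theta> * transpose_mat U - \<Theta>"
    unfolding A_def Aop_def E_def U_def ..
  have t1: "mtrace (\<Lambda> * toeplitzT m n Sig) = (\<Sum>i<K. (E * (\<Lambda> * (transpose_mat E * S))) $$ (i,i))"
  proof -
    have "\<Lambda> * toeplitzT m n Sig = (\<Lambda> * (transpose_mat E * S)) * E"
      unfolding Tn using L Et S E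
      by (simp add: assoc_mult_mat[of _ k k _ K _ k] assoc_mult_mat[of _ k K _ K _ k])
    moreover have "\<Lambda> * (transpose_mat E * S) \<in> carrier_mat k K" using L Et S by auto
    moreover have cc: "(\<Lambda> * (transpose_mat E * S)) * E \<in> carrier_mat k k" using L Et S E by auto
    ultimately show ?thesis
      using tr_comm[of "\<Lambda> * (transpose_mat E * S)" k K E] E mtrace_carrier[OF cc]
      by simp
  qed
  have t2: "(\<Sum>i<K. (U * (\<Theta> * (transpose_mat U * S))) $$ (i,i)) = (\<Sum>i<K. (\<Theta> * S) $$ (i,i))"
  proof -
    have c: "\<Theta> * (transpose_mat U * S) \<in> carrier_mat K K" using T Ut S by auto
    have "(\<Theta> * (transpose_mat U * S)) * U = \<Theta> * S"
      using T Ut S U USU by (simp add: assoc_mult_mat[of _ K K _ K _ K])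
    thus ?thesis using tr_comm[OF U c] by simp
  qed
  have X1: "E * \<Lambda> * transpose_mat E \<in> carrier_mat K K" using E L Et by auto
  have X2: "U * \<Theta> * transpose_mat U \<in> carrier_mat K K" using U T Ut by auto
  have e1: "E * \<Lambda> * transpose_mat E * S = E * (\<Lambda> * (transpose_mat E * S))"
    using E L Et S by (simp add: assoc_mult_mat[of _ K k _ k _ K] assoc_mult_mat[of _ K k _ K _ K]
        assoc_mult_mat[of _ k k _ K _ K] assoc_mult_mat[of _ k K _ K _ K])
  have e2: "U * \<Theta> * transpose_mat U * S = U * (\<Theta> * (transpose_mat U * S))"
    using U T Ut S by (simp add: assoc_mult_mat[of _ K K _ K _ K])
  have AS: "A * S = E * (\<Lambda> * (transpose_mat E * S)) + U * (\<Theta> * (transpose_mat U * S)) - \<Theta> * S"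
    unfolding Adef
    by (simp add: minus_mult_distrib_mat[OF add_carrier_mat[OF X2] T S]
        add_mult_distrib_mat[OF X1 X2 S] e1 e2)
  have c1: "E * (\<Lambda> * (transpose_mat E * S)) \<in> carrier_mat K K" using E L Et S by auto
  have c2: "U * (\<Theta> * (transpose_mat U * S)) \<in> carrier_mat K K" using U T Ut S by auto
  have c3: "\<Theta> * S \<in> carrier_mat K K" using T S by auto
  have cAS: "A * S \<in> carrier_mat K K" using pA S unfolding pos_def_mat_def by auto
  have "mtrace (A * S) = (\<Sum>i<K. (A * S) $$ (i,i))" by (rule mtrace_carrier[OF cAS])
  also have "\<dots> = (\<Sum>i<K. (E * (\<Lambda> * (transpose_mat E * S))) $$ (i,i)
       + (U * (\<Theta> * (transpose_mat U * S))) $$ (i,i) - (\<Theta> * S) $$ (i,i))"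
    unfolding AS using c1 c2 c3 T S U E by (intro sum.cong refl) (auto simp: carrier_matD)
  also have "\<dots> = mtrace (\<Lambda> * toeplitzT m n Sig)"
    unfolding t1 using t2 by (simp add: sum.distrib sum_subtractf)
  finally have trAS: "mtrace (A * S) = mtrace (\<Lambda> * toeplitzT m n Sig)" .
  have A: "A \<in> carrier_mat K K" using pA unfolding pos_def_mat_def by auto
  from main_ineq[OF pA pS] have i1: "det (A*S) > 0" "real K + ln (det (A*S)) \<le> mtrace (A*S)" by auto
  from main_ineq[OF pA id_pd] have dA: "det A > 0" using A by simp
  from main_ineq[OF id_pd pS] have dS: "det S > 0" using S by simp
  have "ln (det (A*S)) = ln (det A) + ln (det S)"
    using det_mult[OF A S] dA dS by (simp add: ln_mult_pos)
  with i1 trAS have "real K + ln (det S) \<le> mtrace (\<Lambda> * toeplitzT m n Sig) - ln (det A)" by simp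
  thus ?thesis unfolding Jfun_def A_def K_def S_def by simp
qed
end
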